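(* Let $C=C_{\{\mathcal{I}_n,\mathcal{J}_n\}}$ be a nice Cantor set, let $0<c<1$ be a constant with $J_{n,i}\cap cI_{n,i}\neq\emptyset$ for all $n,i$, and assume $|J_{n,i}|<\frac{1-c}{3}|I_{n,i}|$ for all $n,i$. Then there is a constant $c'>0$ such that for any two distinct $J,J'\in\mathcal{J}$, if $K$ is the interval between $J$ and $J'$, then $|K|\ge c'\min\{|J|,|J'|\}$.
   Context: A Cantor construction $\{\mathcal{I}_n,\mathcal{J}_n\}_n$: for each $n\in\mathbb{N}$, $\mathcal{I}_n=\{I_{n,i}\}_i$ is a collection of closed intervals with mutually disjoint interiors and $\mathcal{J}_n=\{J_{n,i}\}_i$ a collection of open intervals with $J_{n,i}\subset I_{n,i}$, such that each $I_{n+1,i}$ is contained in some $I_{n,j}$, $\bigcup\mathcal{I}_{n+1}=\bigcup\mathcal{I}_n\setminus\bigcup\mathcal{J}_n$, $\sup_j|I_{n,j}|\to0$, and $\bigcup\mathcal{I}_1$ is bounded; $C=\bigcap_n\bigcup_iI_{n,i}$, $\mathcal{I}=\bigcup_n\mathcal{I}_n$, $\mathcal{J}=\bigcup_n\mathcal{J}_n$. Nice: there is $0<c<1$ with $cI_{n,i}\cap J_{n,i}\neq\emptyset$ for all $n,i$ ($cI$ the interval concentric with $I$ of length $c|I|$). *)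

theory Defs
  imports "HOL-Analysis.Analysis"
begin

text \<open>An interval is encoded by its endpoints (lo, hi).
  Levels are indexed by n :: nat starting at 0; the indices of the n-th
  level range over the set Idx n of some index type.\<close>

definition ilen :: "real \<times> real \<Rightarrow> real" where
  "ilen p = snd p - fst p"

definition cl_iv :: "real \<times> real \<Rightarrow> real set" where
  "cl_iv p = {fst p .. snd p}"

definition op_iv :: "real \<times> real \<Rightarrow> real set" where
  "op_iv p = {fst p <..< snd p}"

definition scale_iv :: "real \<Rightarrow> real \<times> real \<Rightarrow> real set" where
  "scale_iv c p = {(fst p + snd p) / 2 - c * ilen p / 2 .. (fst p + snd p) / 2 + c * ilen p / 2}"

definition cantor_construction ::
  "(nat \<Rightarrow> 'i set) \<Rightarrow> (nat \<Rightarrow> 'i \<Rightarrow> real \<times> real) \<Rightarrow> (nat \<Rightarrow> 'i \<Rightarrow> real \<times> real) \<Rightarrow> bool" where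
  "cantor_construction Idx I J \<longleftrightarrow>
     (\<forall>n. \<forall>i\<in>Idx n. fst (I n i) \<le> snd (I n i)) \<and>
     (\<forall>n. \<forall>i\<in>Idx n. fst (J n i) \<le> snd (J n i) \<and> op_iv (J n i) \<subseteq> cl_iv (I n i)) \<and>
     (\<forall>n. \<forall>i\<in>Idx n. \<forall>j\<in>Idx n. i \<noteq> j \<longrightarrow>
          interior (cl_iv (I n i)) \<inter> interior (cl_iv (I n j)) = {}) \<and>
     (\<forall>n. \<forall>i\<in>Idx (Suc n). \<exists>j\<in>Idx n. cl_iv (I (Suc n) i) \<subseteq> cl_iv (I n j)) \<and>
     (\<forall>n. (\<Union>i\<in>Idx (Suc n). cl_iv (I (Suc n) i)) =
          (\<Union>i\<in>Idx n. cl_iv (I n i)) - (\<Union>i\<in>Idx n. op_iv (J n i))) \<and>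
     (\<forall>\<epsilon>>0. \<exists>N. \<forall>n\<ge>N. \<forall>i\<in>Idx n. ilen (I n i) \<le> \<epsilon>) \<and>
     bounded (\<Union>i\<in>Idx 0. cl_iv (I 0 i))"

definition nice_const ::
  "(nat \<Rightarrow> 'i set) \<Rightarrow> (nat \<Rightarrow> 'i \<Rightarrow> real \<times> real) \<Rightarrow> (nat \<Rightarrow> 'i \<Rightarrow> real \<times> real) \<Rightarrow> real \<Rightarrow> bool" where
  "nice_const Idx I J c \<longleftrightarrow> 0 < c \<and> c < 1 \<and>
     (\<forall>n. \<forall>i\<in>Idx n. scale_iv c (I n i) \<inter> op_iv (J n i) \<noteq> {})"

definition between_len :: "real \<times> real \<Rightarrow> real \<times> real \<Rightarrow> real" where
  "between_len p q = (if snd p \<le> fst q then fst q - snd p else fst p - snd q)"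

end

theory Submission
  imports Defs
begin

lemma margin:
  fixes c :: real and p q :: "real \<times> real"
  assumes "scale_iv c q \<inter> op_iv p \<noteq> {}" "ilen p < (1 - c) / 3 * ilen q" "fst p \<le> snd p"
  shows "fst q + ilen p / 2 < fst p" "snd p + ilen p / 2 < snd q" "fst p < snd p"
proof -
  obtain x where x: "x \<in> scale_iv c q" "x \<in> op_iv p" using assms(1) by blast
  have a: "fst p < x" "x < snd p" using x(2) by (auto simp: op_iv_def)
  have b: "(fst q + snd q) / 2 - c * ilen q / 2 \<le> x" "x \<le> (fst q + snd q) / 2 + c * ilen q / 2"
    using x(1) by (auto simp: scale_iv_def)
  have e: "(1 - c) / 3 * ilen q = ilen q / 3 - c * ilen q / 3" by (simp add: field_simps)
  have l: "ilen p = snd p - fst p" "ilen q = snd q - fst q" by (simp_all add: ilen_def)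
  define C where "C = c * ilen q"
  have e2: "ilen p < ilen q / 3 - C / 3" using assms(2) e C_def by simp
  have b2: "(fst q + snd q) / 2 - C / 2 \<le> x" "x \<le> (fst q + snd q) / 2 + C / 2" using b C_def by simp_all
  show "fst q + ilen p / 2 < fst p" using a b2 e2 l by argo
  show "snd p + ilen p / 2 < snd q" using a b2 e2 l by argo
  show "fst p < snd p" using a by linarith
qed

lemma sep:
  fixes p q :: "real \<times> real"
  assumes "op_iv p \<inter> {a<..<b} = {}" "fst p < snd p" "a < b"
  shows "snd p \<le> a \<or> b \<le> fst p"
proof (rule ccontr)
  assume "\<not> ?thesis"
  hence "a < snd p" "fst p < b" by auto
  define x where "x = (max (fst p) a + min (snd p) b) / 2"
  have "x \<in> op_iv p" "x \<in> {a<..<b}" using \<open>a < snd p\<close> \<open>fst p < b\<close> assms(2,3)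
    by (auto simp: x_def op_iv_def max_def min_def)
  thus False using assms(1) by blast
qed

lemma between_bound:
  fixes p q r :: "real \<times> real"
  assumes "snd p \<le> fst r \<or> snd r \<le> fst p" "fst r + ilen q / 2 < fst q" "snd q + ilen q / 2 < snd r"
    "fst p < snd p" "fst q < snd q"
  shows "between_len p q \<ge> ilen q / 2 \<and> between_len q p \<ge> ilen q / 2"
  using assms unfolding between_len_def ilen_def
  by argo

lemma union_mono:
  assumes "cantor_construction Idx I J"
  shows "k \<ge> Suc n \<Longrightarrow> (\<Union>i\<in>Idx k. cl_iv (I k i)) \<subseteq> (\<Union>i\<in>Idx (Suc n). cl_iv (I (Suc n) i))"
proof (induction k rule: dec_induct)
  case base then show ?case by simp
next
  case (step k)
  have "(\<Union>i\<in>Idx (Suc k). cl_iv (I (Suc k) i)) \<subseteq> (\<Union>i\<in>Idx k. cl_iv (I k i))"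
    using assms unfolding cantor_construction_def by blast
  then show ?case using step by blast
qed

lemma disj:
  assumes cc: "cantor_construction Idx I J" and "i \<in> Idx n" "j \<in> Idx m" "n \<le> m"
    "op_iv (J n i) \<noteq> op_iv (J m j)"
  shows "op_iv (J n i) \<inter> {fst (I m j)<..<snd (I m j)} = {}"
proof (cases "n = m")
  case True
  then have ij: "i \<noteq> j" using assms by auto
  have c2: "\<forall>n. \<forall>i\<in>Idx n. fst (J n i) \<le> snd (J n i) \<and> op_iv (J n i) \<subseteq> cl_iv (I n i)"
    and c3: "\<forall>n. \<forall>i\<in>Idx n. \<forall>j\<in>Idx n. i \<noteq> j \<longrightarrow>
          interior (cl_iv (I n i)) \<inter> interior (cl_iv (I n j)) = {}"
    using cc unfolding cantor_construction_def by auto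
  have "op_iv (J n i) \<subseteq> cl_iv (I n i)" using c2 assms(2) by blast
  moreover have "open (op_iv (J n i))" by (simp add: op_iv_def)
  ultimately have s: "op_iv (J n i) \<subseteq> interior (cl_iv (I n i))" by (simp add: interior_maximal)
  have "interior (cl_iv (I n i)) \<inter> interior (cl_iv (I n j)) = {}"
    using c3 assms(2,3) ij True by simp
  moreover have "interior (cl_iv (I m j)) = {fst (I m j)<..<snd (I m j)}"
    by (simp add: cl_iv_def interior_atLeastAtMost_real)
  ultimately show ?thesis using True s by blast
next
  case False
  then have "m \<ge> Suc n" using assms by auto
  have c5: "(\<Union>i\<in>Idx (Suc n). cl_iv (I (Suc n) i)) =
          (\<Union>i\<in>Idx n. cl_iv (I n i)) - (\<Union>i\<in>Idx n. op_iv (J n i))"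
    using cc unfolding cantor_construction_def by blast
  have "cl_iv (I m j) \<subseteq> (\<Union>i\<in>Idx m. cl_iv (I m i))" using assms(3) by blast
  also have "\<dots> \<subseteq> (\<Union>i\<in>Idx (Suc n). cl_iv (I (Suc n) i))"
    using union_mono[OF cc \<open>m \<ge> Suc n\<close>] .
  also have "\<dots> \<subseteq> - op_iv (J n i)" unfolding c5 using assms(2) by blast
  finally have "cl_iv (I m j) \<inter> op_iv (J n i) = {}" by blast
  moreover have "{fst (I m j)<..<snd (I m j)} \<subseteq> cl_iv (I m j)" by (auto simp: cl_iv_def)
  ultimately show ?thesis by blast
qed

theorem lemma5p4:
  fixes Idx :: "nat \<Rightarrow> 'i set" and I J :: "nat \<Rightarrow> 'i \<Rightarrow> real \<times> real" and c :: real
  assumes "cantor_construction Idx I J"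
    and "nice_const Idx I J c"
    and "\<forall>n. \<forall>i\<in>Idx n. ilen (J n i) < (1 - c) / 3 * ilen (I n i)"
  shows "\<exists>c'>0. \<forall>n i m j. i \<in> Idx n \<longrightarrow> j \<in> Idx m \<longrightarrow> op_iv (J n i) \<noteq> op_iv (J m j) \<longrightarrow>
           between_len (J n i) (J m j) \<ge> c' * min (ilen (J n i)) (ilen (J m j))"
proof -
  have N: "\<forall>n. \<forall>i\<in>Idx n. scale_iv c (I n i) \<inter> op_iv (J n i) \<noteq> {}"
    using assms(2) unfolding nice_const_def by (elim conjE)
  have C2: "\<forall>n. \<forall>i\<in>Idx n. fst (J n i) \<le> snd (J n i) \<and> op_iv (J n i) \<subseteq> cl_iv (I n i)"
    using assms(1) unfolding cantor_construction_def by (elim conjE)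
  have M: "fst (I n i) + ilen (J n i) / 2 < fst (J n i) \<and> snd (J n i) + ilen (J n i) / 2 < snd (I n i)
      \<and> fst (J n i) < snd (J n i)" if "i \<in> Idx n" for n i
  proof -
    have 1: "scale_iv c (I n i) \<inter> op_iv (J n i) \<noteq> {}" using N that by simp
    have 2: "fst (J n i) \<le> snd (J n i)" using C2 that by simp
    have 3: "ilen (J n i) < (1 - c) / 3 * ilen (I n i)" using assms(3) that by simp
    show ?thesis using margin[OF 1 3 2] by simp
  qed
  have key: "between_len (J n i) (J m j) \<ge> ilen (J m j) / 2 \<and> between_len (J m j) (J n i) \<ge> ilen (J m j) / 2"
    if "i \<in> Idx n" "j \<in> Idx m" "n \<le> m" "op_iv (J n i) \<noteq> op_iv (J m j)" for n i m j
  proof -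
    have d: "op_iv (J n i) \<inter> {fst (I m j)<..<snd (I m j)} = {}" using disj[OF assms(1) that] .
    have Mi: "fst (J n i) < snd (J n i)" using M that(1) by blast
    have Mj: "fst (I m j) + ilen (J m j) / 2 < fst (J m j)" "snd (J m j) + ilen (J m j) / 2 < snd (I m j)"
      "fst (J m j) < snd (J m j)" using M[OF that(2)] by auto
    have "fst (I m j) < snd (I m j)" using Mj unfolding ilen_def by argo
    from sep[OF d Mi this] show ?thesis by (rule between_bound[OF _ Mj(1,2) Mi Mj(3)])
  qed
  show ?thesis
  proof (intro exI[of _ "1/2"] conjI allI impI)
    fix n i m j assume h: "i \<in> Idx n" "j \<in> Idx m" "op_iv (J n i) \<noteq> op_iv (J m j)"
    show "between_len (J n i) (J m j) \<ge> 1/2 * min (ilen (J n i)) (ilen (J m j))"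
    proof (cases "n \<le> m")
      case True
      then show ?thesis using key[OF h(1,2) True h(3)] by (auto simp: min_def)
    next
      case False
      then show ?thesis using key[OF h(2,1) _ h(3)[symmetric]] by (auto simp: min_def)
    qed
  qed simp
qed

end
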